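(* For every integer $n\geq 1$, the empty graph $\overline{K_n}$ on $n$ vertices satisfies $\operatorname{th}_{\operatorname{H}}(\overline{K_n})=\lceil 2\sqrt{n}-1\rceil$.
   Context: All graphs are finite, simple and undirected. Hopping color change rule: a blue vertex $v$ may force a white vertex $w$ to become blue if $v$ has not previously performed a force and every neighbor of $v$ is blue. For an initial blue set $B$, a chronological list of forces of $B$ is a sequence of such forces applied one at a time until no further force is possible; its underlying unordered set is a set of forces of $B$. $B$ is a hopping forcing set if some chronological list of forces of $B$ turns all vertices blue. For a set of forces $\mathcal F$ of $B$, let $\mathcal F^{(0)}=B$ and for $t\geq1$ let $\mathcal F^{(t)}$ be the set of vertices $w\notin U_{t-1}:=\bigcup_{i=0}^{t-1}\mathcal F^{(i)}$ for which there is $(v\to w)\in\mathcal F$ with $v\in U_{t-1}$ and all neighbors of $v$ in $U_{t-1}$. $\operatorname{pt}_{\operatorname{H}}(G;\mathcal F)$ is the least $t$ with $\bigcup_{i=0}^t\mathcal F^{(i)}=V(G)$ ($\infty$ if none); $\operatorname{pt}_{\operatorname{H}}(G;B)$ is the minimum of $\operatorname{pt}_{\operatorname{H}}(G;\mathcal F)$ over sets of forces $\mathcal F$ of $B$ ($\infty$ if $B$ is not a hopping forcing set). $\operatorname{th}_{\operatorname{H}}(G)=\min_{B\subseteq V(G)}\big(|B|+\operatorname{pt}_{\operatorname{H}}(G;B)\big)$. *)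

theory Defs
  imports Complex_Main "HOL-Library.Extended_Nat"
begin

text \<open>A finite simple graph is given by a vertex set V and an edge relation E
(assumed symmetric and irreflexive where needed).  A force is a pair (v, w)
meaning v forces w.\<close>

definition hop_chron_valid :: "'a set \<Rightarrow> ('a \<Rightarrow> 'a \<Rightarrow> bool) \<Rightarrow> 'a set \<Rightarrow> ('a \<times> 'a) list \<Rightarrow> bool" where
  "hop_chron_valid V E B fs \<longleftrightarrow>
     (\<forall>i < length fs.
        let v = fst (fs ! i); w = snd (fs ! i); U = B \<union> snd ` set (take i fs) in
          v \<in> V \<and> v \<in> U \<and> w \<in> V \<and> w \<notin> U \<and> v \<notin> fst ` set (take i fs) \<and>
          (\<forall>u \<in> V. E v u \<longrightarrow> u \<in> U))"

definition hop_chron_list :: "'a set \<Rightarrow> ('a \<Rightarrow> 'a \<Rightarrow> bool) \<Rightarrow> 'a set \<Rightarrow> ('a \<times> 'a) list \<Rightarrow> bool" where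
  "hop_chron_list V E B fs \<longleftrightarrow>
     hop_chron_valid V E B fs \<and> \<not> (\<exists>v w. hop_chron_valid V E B (fs @ [(v, w)]))"

definition hop_force_sets :: "'a set \<Rightarrow> ('a \<Rightarrow> 'a \<Rightarrow> bool) \<Rightarrow> 'a set \<Rightarrow> ('a \<times> 'a) set set" where
  "hop_force_sets V E B = {set fs | fs. hop_chron_list V E B fs}"

definition hopping_forcing_set :: "'a set \<Rightarrow> ('a \<Rightarrow> 'a \<Rightarrow> bool) \<Rightarrow> 'a set \<Rightarrow> bool" where
  "hopping_forcing_set V E B \<longleftrightarrow> B \<subseteq> V \<and>
     (\<exists>fs. hop_chron_list V E B fs \<and> B \<union> snd ` set fs = V)"

fun hop_blue :: "'a set \<Rightarrow> ('a \<Rightarrow> 'a \<Rightarrow> bool) \<Rightarrow> 'a set \<Rightarrow> ('a \<times> 'a) set \<Rightarrow> nat \<Rightarrow> 'a set" where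
  "hop_blue V E B F 0 = B"
| "hop_blue V E B F (Suc t) =
     hop_blue V E B F t \<union>
     {w. w \<notin> hop_blue V E B F t \<and>
         (\<exists>v. (v, w) \<in> F \<and> v \<in> hop_blue V E B F t \<and>
              (\<forall>u \<in> V. E v u \<longrightarrow> u \<in> hop_blue V E B F t))}"

definition pt_hop_forces :: "'a set \<Rightarrow> ('a \<Rightarrow> 'a \<Rightarrow> bool) \<Rightarrow> 'a set \<Rightarrow> ('a \<times> 'a) set \<Rightarrow> enat" where
  "pt_hop_forces V E B F =
     (if \<exists>t. hop_blue V E B F t = V then enat (LEAST t. hop_blue V E B F t = V) else \<infinity>)"

definition pt_hop :: "'a set \<Rightarrow> ('a \<Rightarrow> 'a \<Rightarrow> bool) \<Rightarrow> 'a set \<Rightarrow> enat" where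
  "pt_hop V E B =
     (if hopping_forcing_set V E B
      then (INF F \<in> hop_force_sets V E B. pt_hop_forces V E B F) else \<infinity>)"

definition th_hop :: "'a set \<Rightarrow> ('a \<Rightarrow> 'a \<Rightarrow> bool) \<Rightarrow> enat" where
  "th_hop V E = (INF B \<in> Pow V. enat (card B) + pt_hop V E B)"

end

theory Submission
  imports Defs
begin

lemma card_rel_image:
  assumes "inj_on fst F" "finite A"
  shows "card (F `` A) \<le> card A"
proof -
  let ?G = "F \<inter> (A \<times> UNIV)"
  have inj: "inj_on fst ?G" using assms(1) by (rule inj_on_subset) auto
  have sub: "fst ` ?G \<subseteq> A" by auto
  have fin: "finite ?G" using finite_imageD[OF finite_subset[OF sub assms(2)] inj] .
  have "F `` A = snd ` ?G" by force
  hence "card (F `` A) \<le> card ?G" using card_image_le[OF fin] by simp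
  also have "card ?G = card (fst ` ?G)" using card_image[OF inj] by simp
  also have "\<dots> \<le> card A" using card_mono[OF assms(2) sub] .
  finally show ?thesis .
qed

lemma hop_blue_mono_step: "hop_blue V E B F t \<subseteq> hop_blue V E B F (Suc t)" by auto

lemma hop_blue_self: "hop_blue V E B F t \<subseteq> B \<union> F `` hop_blue V E B F t"
proof (induction t)
  case 0 then show ?case by simp
next
  case (Suc t)
  have m: "F `` hop_blue V E B F t \<subseteq> F `` hop_blue V E B F (Suc t)"
    using hop_blue_mono_step by (meson Image_mono order_refl)
  show ?case
  proof
    fix x assume "x \<in> hop_blue V E B F (Suc t)"
    then consider "x \<in> hop_blue V E B F t" | "\<exists>v. (v,x) \<in> F \<and> v \<in> hop_blue V E B F t" by auto
    then show "x \<in> B \<union> F `` hop_blue V E B F (Suc t)"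
    proof cases
      case 1 then show ?thesis using Suc.IH m by blast
    next
      case 2
      then obtain v where "(v,x) \<in> F" "v \<in> hop_blue V E B F t" by blast
      then show ?thesis using hop_blue_mono_step[of V E B F t] by blast
    qed
  qed
qed

lemma hop_blue_Suc_sub: "hop_blue V E B F (Suc t) \<subseteq> B \<union> F `` hop_blue V E B F t"
  using hop_blue_self[of V E B F t] by auto

lemma hop_blue_fin: "finite B \<Longrightarrow> finite F \<Longrightarrow> finite (hop_blue V E B F t)"
proof (induction t)
  case 0 then show ?case by simp
next
  case (Suc t)
  have "hop_blue V E B F (Suc t) \<subseteq> hop_blue V E B F t \<union> snd ` F" by force
  then show ?case using Suc finite_subset by blast
qed

lemma card_hop_blue:
  assumes "inj_on fst F" "finite B" "finite F"
  shows "card (hop_blue V E B F t) \<le> card B * (t+1)"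
proof (induction t)
  case 0 then show ?case by simp
next
  case (Suc t)
  let ?U = "hop_blue V E B F t"
  have finI: "finite (F `` ?U)"
    by (rule finite_subset[of _ "snd ` F"]) (use assms(3) in force)+
  have "card (hop_blue V E B F (Suc t)) \<le> card (B \<union> F `` ?U)"
    by (rule card_mono) (use assms(2) finI hop_blue_Suc_sub[of V E B F t] in auto)
  also have "\<dots> \<le> card B + card (F `` ?U)" by (rule card_Un_le)
  also have "\<dots> \<le> card B + card ?U"
    using card_rel_image[OF assms(1) hop_blue_fin[OF assms(2,3)]] by simp
  also have "\<dots> \<le> card B * (Suc t + 1)" using Suc by simp
  finally show ?case .
qed

lemma valid_distinct:
  assumes "hop_chron_valid V E B fs"
  shows "distinct (map fst fs)"
proof -
  have key: "fst (fs ! i) \<noteq> fst (fs ! j)" if "i < j" "j < length fs" for i j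
  proof -
    have "fs ! i \<in> set (take j fs)"
      using that by (metis in_set_conv_nth length_take min.absorb4 nth_take order.strict_trans)
    moreover have "fst (fs ! j) \<notin> fst ` set (take j fs)"
      using assms that unfolding hop_chron_valid_def Let_def by blast
    ultimately show ?thesis by (metis image_eqI)
  qed
  show ?thesis
    unfolding distinct_conv_nth
    by (metis key length_map linorder_neqE_nat nth_map)
qed

lemma lower:
  assumes "B \<subseteq> {0..<n}" "F \<in> hop_force_sets {0..<n} E B"
    "hop_blue {0..<n} E B F t = {0..<n}"
  shows "n \<le> card B * (t+1)"
proof -
  obtain fs where F: "F = set fs" "hop_chron_list {0..<n} E B fs"
    using assms(2) unfolding hop_force_sets_def by blast
  have "distinct (map fst fs)" using F(2) valid_distinct unfolding hop_chron_list_def by blast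
  hence inj: "inj_on fst F" using F(1) by (simp add: distinct_map)
  have "finite B" using assms(1) finite_subset by blast
  from card_hop_blue[OF inj this, of V] show ?thesis
    using assms(3) F(1) card_hop_blue[OF inj \<open>finite B\<close>, of "{0..<n}" E t] by simp
qed

lemma arith1:
  fixes b t n :: nat
  assumes "n \<le> b*(t+1)"
  shows "nat \<lceil>2*sqrt(real n) - 1\<rceil> \<le> b + t"
proof -
  have r: "real n \<le> real b * (real t + 1)"
    using of_nat_mono[OF assms] by (simp add: algebra_simps)
  have s1: "sqrt (real n) \<le> sqrt (real b * (real t + 1))" using r by simp
  have "(2*sqrt (real b * (real t+1)))^2 \<le> (real b + real t + 1)^2"
  proof -
    have "(2*sqrt (real b * (real t+1)))^2 = 4 * (real b * (real t+1))"
      by (simp add: power_mult_distrib)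
    also have "\<dots> \<le> (real b + real t + 1)^2"
      using sum_squares_ge_zero[of "real b - real t - 1" 0]
      by (simp add: power2_eq_square algebra_simps)
    finally show ?thesis .
  qed
  hence "2*sqrt (real b * (real t+1)) \<le> real b + real t + 1"
    by (rule power2_le_imp_le) simp
  hence "2*sqrt(real n) - 1 \<le> real (b + t)" using s1 by linarith
  hence "2*sqrt(real n) - 1 \<le> real_of_int (int (b + t))" by simp
  hence "\<lceil>2*sqrt(real n) - 1\<rceil> \<le> int (b + t)"
    by (rule ceiling_le)
  thus ?thesis by simp
qed

lemma arith2:
  fixes n :: nat
  assumes "n \<ge> 1"
  defines "T \<equiv> nat \<lceil>2*sqrt(real n) - 1\<rceil>"
  defines "a \<equiv> (T+1) div 2"
  defines "c \<equiv> (T+1) - a"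
  shows "1 \<le> a" "1 \<le> c" "a \<le> n" "n \<le> a*c" "a + (c - 1) = T"
proof -
  have sq1: "1 \<le> sqrt (real n)" using assms by simp
  have sqn: "sqrt (real n) \<le> real n"
  proof -
    have "sqrt (real n) * 1 \<le> sqrt (real n) * sqrt (real n)"
      by (rule mult_left_mono) (use sq1 in auto)
    thus ?thesis by simp
  qed
  let ?x = "2*sqrt(real n) - 1"
  have xpos: "?x > 0" using sq1 by linarith
  have c0: "0 \<le> \<lceil>?x\<rceil>" using xpos by (metis ceiling_mono ceiling_zero less_imp_le)
  have Tx: "real T = real_of_int \<lceil>?x\<rceil>" unfolding T_def by (rule of_nat_nat[OF c0])
  have T1: "real T \<ge> ?x" using Tx le_of_int_ceiling by simp
  have T2: "real T < 2*sqrt(real n)" using Tx ceiling_correct[of ?x] by simp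
  have T1': "2 * sqrt (real n) \<le> real T + 1" using T1 by simp
  have "(2 * sqrt (real n))^2 \<le> (real T + 1)^2"
    by (rule power_mono[OF T1']) (use sq1 in simp)
  hence "4 * real n \<le> (real T + 1)^2" by (simp add: power_mult_distrib)
  hence "real (4 * n) \<le> real ((T+1)*(T+1))" by (simp add: power2_eq_square algebra_simps)
  hence m2: "4 * n \<le> (T+1)*(T+1)" by (simp only: of_nat_le_iff)
  have "T \<ge> 1" using T1 sq1 by linarith
  thus "1 \<le> a" unfolding a_def by simp
  show "1 \<le> c" unfolding c_def a_def by simp
  show "a + (c - 1) = T" unfolding c_def a_def using \<open>T \<ge> 1\<close> by simp
  have "real T < 2 * real n" using T2 sqn by linarith
  hence "T < 2 * n" by linarith
  thus "a \<le> n" unfolding a_def by simp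
  define r where "r = (T+1) mod 2"
  have M: "T+1 = 2*a + r" "c = a + r" "r \<le> 1" unfolding r_def a_def c_def by presburger+
  have "(T+1)*(T+1) = 4*(a*c) + r"
  proof (cases "r = 0")
    case True then show ?thesis using M by (simp add: algebra_simps)
  next
    case False then have "r = 1" using M by simp
    then show ?thesis using M by (simp add: algebra_simps)
  qed
  thus "n \<le> a*c" using m2 M by linarith
qed


definition cfs :: "nat \<Rightarrow> nat \<Rightarrow> (nat \<times> nat) list" where
  "cfs n a = map (\<lambda>j. (j, j+a)) [0..<n-a]"

lemma cfs_take: "i \<le> n - a \<Longrightarrow> set (take i (cfs n a)) = (\<lambda>j. (j, j+a)) ` {0..<i}"
  unfolding cfs_def by (simp add: take_map min_def)

lemma cfs_nth: "i < n - a \<Longrightarrow> cfs n a ! i = (i, i+a)"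
  unfolding cfs_def by simp

lemma cfs_set: "set (cfs n a) = (\<lambda>j. (j, j+a)) ` {0..<n-a}"
  unfolding cfs_def by auto

lemma snd_img: "snd ` ((\<lambda>j. (j, j+a)) ` {0..<k}) = {a..<k+(a::nat)}"
proof -
  have "snd ` ((\<lambda>j. (j, j+a)) ` {0..<k}) = (\<lambda>j. j+a) ` {0..<k}" by (simp add: image_image)
  also have "\<dots> = {a..<k+a}"
  proof (rule set_eqI)
    fix x show "x \<in> (\<lambda>j. j+a) ` {0..<k} \<longleftrightarrow> x \<in> {a..<k+a}"
    proof
      assume "x \<in> {a..<k+a}" then show "x \<in> (\<lambda>j. j+a) ` {0..<k}"
        by (intro image_eqI[where x="x-a"]) auto
    qed auto
  qed
  finally show ?thesis .
qed

lemma cfs_valid: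
  assumes "a \<le> n" "1 \<le> a"
  shows "hop_chron_valid {0..<n} (\<lambda>_ _. False) {0..<a} (cfs n a)"
  unfolding hop_chron_valid_def Let_def
proof (intro allI impI)
  fix i assume i: "i < length (cfs n a)"
  hence i': "i < n - a" unfolding cfs_def by simp
  have S: "snd ` set (take i (cfs n a)) = {a..<i+a}"
  proof -
    have "snd ` set (take i (cfs n a)) = (\<lambda>j. j+a) ` {0..<i}"
      using cfs_take[of i n a] i' by (simp add: image_image)
    also have "\<dots> = {a..<i+a}"
    proof (rule set_eqI)
      fix x show "x \<in> (\<lambda>j. j+a) ` {0..<i} \<longleftrightarrow> x \<in> {a..<i+a}"
      proof
        assume "x \<in> {a..<i+a}" then show "x \<in> (\<lambda>j. j+a) ` {0..<i}"
          by (intro image_eqI[where x="x-a"]) auto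
      qed auto
    qed
    finally show ?thesis .
  qed
  have Fs: "fst ` set (take i (cfs n a)) = {0..<i}"
    using cfs_take[of i n a] i' by (simp add: image_image)
  have U: "{0..<a} \<union> snd ` set (take i (cfs n a)) = {0..<i+a}"
    unfolding S by (rule set_eqI) (simp, linarith)
  show "fst (cfs n a ! i) \<in> {0..<n} \<and>
       fst (cfs n a ! i) \<in> {0..<a} \<union> snd ` set (take i (cfs n a)) \<and>
       snd (cfs n a ! i) \<in> {0..<n} \<and>
       snd (cfs n a ! i) \<notin> {0..<a} \<union> snd ` set (take i (cfs n a)) \<and>
       fst (cfs n a ! i) \<notin> fst ` set (take i (cfs n a)) \<and>
       (\<forall>u\<in>{0..<n}. False \<longrightarrow> u \<in> {0..<a} \<union> snd ` set (take i (cfs n a)))"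
    unfolding U Fs cfs_nth[OF i'] using i' assms by simp linarith
qed

lemma cfs_cover:
  assumes "a \<le> n"
  shows "{0..<a} \<union> snd ` set (cfs n a) = {0..<n}"
  unfolding cfs_set snd_img using assms by (intro set_eqI) (simp, linarith)

lemma cfs_list:
  assumes "a \<le> n" "1 \<le> a"
  shows "hop_chron_list {0..<n} (\<lambda>_ _. False) {0..<a} (cfs n a)"
  unfolding hop_chron_list_def
proof (intro conjI notI)
  show "hop_chron_valid {0..<n} (\<lambda>_ _. False) {0..<a} (cfs n a)" by (rule cfs_valid[OF assms])
  assume "\<exists>v w. hop_chron_valid {0..<n} (\<lambda>_ _. False) {0..<a} (cfs n a @ [(v, w)])"
  then obtain v w where h: "hop_chron_valid {0..<n} (\<lambda>_ _. False) {0..<a} (cfs n a @ [(v, w)])" by blast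
  let ?i = "length (cfs n a)"
  have "?i < length (cfs n a @ [(v, w)])" by simp
  from h[unfolded hop_chron_valid_def Let_def, rule_format, OF this]
  have "w \<in> {0..<n} \<and> w \<notin> {0..<a} \<union> snd ` set (cfs n a)"
    by simp
  then show False using cfs_cover[OF assms(1)] by blast
qed

lemma cfs_blue:
  assumes "a \<le> n"
  shows "hop_blue {0..<n} (\<lambda>_ _. False) {0..<a} (set (cfs n a)) t = {x. x < n \<and> x < a*(t+1)}"
proof (induction t)
  case 0 then show ?case using assms by auto
next
  case (Suc t)
  have IH': "hop_blue {0..<n} (\<lambda>_ _. False) {0..<a} ((\<lambda>j. (j, j+a)) ` {0..<n-a}) t = {x. x < n \<and> x < a*(t+1)}"
    using Suc.IH by (simp add: cfs_set)
  show ?case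
  proof (rule set_eqI)
    fix x
    show "x \<in> hop_blue {0..<n} (\<lambda>_ _. False) {0..<a} (set (cfs n a)) (Suc t) \<longleftrightarrow> x \<in> {x. x < n \<and> x < a * (Suc t + 1)}"
    proof
      assume "x \<in> hop_blue {0..<n} (\<lambda>_ _. False) {0..<a} (set (cfs n a)) (Suc t)"
      then show "x \<in> {x. x < n \<and> x < a * (Suc t + 1)}"
        unfolding hop_blue.simps by (auto simp: IH' cfs_set algebra_simps)
    next
      assume x: "x \<in> {x. x < n \<and> x < a * (Suc t + 1)}"
      show "x \<in> hop_blue {0..<n} (\<lambda>_ _. False) {0..<a} (set (cfs n a)) (Suc t)"
      proof (cases "x < a*(t+1)")
        case True then show ?thesis using x unfolding hop_blue.simps by (auto simp: Suc.IH)
      next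
        case False
        have "a \<le> a*(t+1)" by simp
        hence xa: "a \<le> x" using False by linarith
        have "(x - a, x) \<in> set (cfs n a)" unfolding cfs_set using x xa
          by (auto intro!: image_eqI[where x="x-a"])
        moreover have "x - a < a*(t+1)" using x False by (auto simp: algebra_simps)
        ultimately show ?thesis using x False unfolding hop_blue.simps by (auto simp: Suc.IH)
      qed
    qed
  qed
qed

theorem proposition3p4:
  fixes n :: nat
  assumes "n \<ge> 1"
  shows "th_hop {0..<n} (\<lambda>_ _. False) = enat (nat \<lceil>2 * sqrt (real n) - 1\<rceil>)"
proof (rule antisym)
  define T where "T = nat \<lceil>2 * sqrt (real n) - 1\<rceil>"
  define a where "a = (T+1) div 2"
  define c where "c = (T+1) - a"
  note ar = arith2[OF assms, folded T_def, folded a_def, folded c_def]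
  let ?V = "{0..<n}" and ?E = "\<lambda>_ _::nat. False" and ?B = "{0..<a}" and ?F = "set (cfs n a)"
  have fs: "hopping_forcing_set ?V ?E ?B"
    unfolding hopping_forcing_set_def using ar(1,3) cfs_list[OF ar(3,1)] cfs_cover[OF ar(3)] by auto
  have Fin: "?F \<in> hop_force_sets ?V ?E ?B"
    unfolding hop_force_sets_def using cfs_list[OF ar(3,1)] by blast
  have cc: "c - 1 + 1 = c" using ar(2) by simp
  have ss: "{x. x < n \<and> x < a*c} = ?V" using ar(4) by auto
  have bl: "hop_blue ?V ?E ?B ?F (c - 1) = ?V"
    using cfs_blue[OF ar(3), of "c-1"] unfolding cc ss .
  have ex: "\<exists>t. hop_blue ?V ?E ?B ?F t = ?V" using bl by blast
  have le: "(LEAST t. hop_blue ?V ?E ?B ?F t = ?V) \<le> c - 1" by (rule Least_le) (rule bl)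
  have "pt_hop_forces ?V ?E ?B ?F \<le> enat (c - 1)"
    unfolding pt_hop_forces_def using ex le by simp
  hence "pt_hop ?V ?E ?B \<le> enat (c - 1)"
    unfolding pt_hop_def if_P[OF fs] by (rule INF_lower2[OF Fin])
  hence "enat (card ?B) + pt_hop ?V ?E ?B \<le> enat (card ?B) + enat (c - 1)"
    by (rule add_left_mono)
  also have "\<dots> = enat T" using ar(5) by simp
  finally have fin: "enat (card ?B) + pt_hop ?V ?E ?B \<le> enat T" .
  have BP: "?B \<in> Pow ?V" using ar(3) by auto
  from fin show "th_hop ?V ?E \<le> enat T" unfolding th_hop_def by (rule INF_lower2[OF BP])
next
  define T where "T = nat \<lceil>2 * sqrt (real n) - 1\<rceil>"
  let ?V = "{0..<n}" and ?E = "\<lambda>_ _::nat. False"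
  show "enat T \<le> th_hop ?V ?E" unfolding th_hop_def
  proof (rule INF_greatest)
    fix B assume B: "B \<in> Pow ?V"
    hence Bs: "B \<subseteq> ?V" by blast
    show "enat T \<le> enat (card B) + pt_hop ?V ?E B"
    proof (cases "hopping_forcing_set ?V ?E B")
      case False then show ?thesis unfolding pt_hop_def by simp
    next
      case True
      have "enat (T - card B) \<le> (INF F \<in> hop_force_sets ?V ?E B. pt_hop_forces ?V ?E B F)"
      proof (rule INF_greatest)
        fix F assume F: "F \<in> hop_force_sets ?V ?E B"
        show "enat (T - card B) \<le> pt_hop_forces ?V ?E B F"
        proof (cases "\<exists>t. hop_blue ?V ?E B F t = ?V")
          case False then show ?thesis unfolding pt_hop_forces_def by simp
        next
          case True
          let ?t = "LEAST t. hop_blue ?V ?E B F t = ?V"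
          have hb: "hop_blue ?V ?E B F ?t = ?V" using True by (rule LeastI_ex)
          have "n \<le> card B * (?t + 1)" by (rule lower[OF Bs F hb])
          hence "T \<le> card B + ?t" unfolding T_def by (rule arith1)
          hence "T - card B \<le> ?t" by simp
          thus ?thesis unfolding pt_hop_forces_def using True by simp
        qed
      qed
      hence "enat (card B) + enat (T - card B) \<le> enat (card B) + pt_hop ?V ?E B"
        unfolding pt_hop_def if_P[OF True] by (rule add_left_mono)
      moreover have "enat T \<le> enat (card B) + enat (T - card B)" by simp
      ultimately show ?thesis by (rule order_trans[rotated])
    qed
  qed
qed

end
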